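(* For all $n\ge0$ and $y_1,\dots,y_n\in M$, $$K^{-1}(y_1\cdots y_n)=\sum_{\pi\ \text{set partition of}\ \{1,\dots,n\}}(y_1\cdots y_n)^\pi .$$
   Context: $\mathbf k$ field of characteristic zero; $(M,\rhd)$ a magmatic algebra; $T(M)$ its tensor algebra (concatenation, unit $\mathbf 1$), with $\rhd$ extended to $T(M)$ by $\mathbf 1\rhd W=W$, $x\rhd(VW)=(x\rhd V)W+V(x\rhd W)$, $(xV)\rhd W=x\rhd(V\rhd W)-(x\rhd V)\rhd W$ ($x\in M$). Gavrilov's $K$-map is the linear map $K:T(M)\to T(M)$ defined recursively by $K(\mathbf 1)=\mathbf 1$, $K(y)=y$ for $y\in M$, and $K(yU)=y\,K(U)-K(y\rhd U)$ for $y\in M$, $U\in T(M)$; it is invertible. For a set partition $\pi$ of $\{1,\dots,n\}$, its blocks $B_1,\dots,B_{|\pi|}$ are ordered so that $\max B_1<\dots<\max B_{|\pi|}$. For a block $B=\{b_1<\dots<b_\ell\}$ set $y_B:=y_{b_1}\rhd\big(y_{b_2}\rhd(\cdots\rhd(y_{b_{\ell-1}}\rhd y_{b_\ell})\cdots)\big)\in M$, and $(y_1\cdots y_n)^\pi:=y_{B_1}y_{B_2}\cdots y_{B_{|\pi|}}\in T(M)$. *)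

theory Defs
  imports "HOL-Library.Poly_Mapping" "HOL-Library.Disjoint_Sets"
begin

text \<open>The vector space M is the free k-vector space on a basis type 'b,
  i.e. M = (finitely supported functions from the basis to k) (every vector space is of this form).  The magmatic
  (bilinear) product on M is given by its structure constants
  C :: 'b \<Rightarrow> 'b \<Rightarrow> M, i.e. b \<rhd> b' = C b b'.  The tensor algebra T(M) is then the
  free associative algebra on 'b, modelled as finitely supported functions on words, with the
  concatenation product and unit the empty word.\<close>

definition smul :: "'k::field \<Rightarrow> ('a \<Rightarrow>\<^sub>0 'k) \<Rightarrow> ('a \<Rightarrow>\<^sub>0 'k)" where
  "smul c f = Poly_Mapping.map (\<lambda>a. c * a) f"

definition lin :: "('a \<Rightarrow> ('c \<Rightarrow>\<^sub>0 'k::field)) \<Rightarrow> ('a \<Rightarrow>\<^sub>0 'k) \<Rightarrow> ('c \<Rightarrow>\<^sub>0 'k)" where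
  "lin F f = (\<Sum>a\<in>Poly_Mapping.keys f. smul (Poly_Mapping.lookup f a) (F a))"

definition mop :: "('b \<Rightarrow> 'b \<Rightarrow> ('b \<Rightarrow>\<^sub>0 'k::field)) \<Rightarrow> ('b \<Rightarrow>\<^sub>0 'k) \<Rightarrow> ('b \<Rightarrow>\<^sub>0 'k) \<Rightarrow> ('b \<Rightarrow>\<^sub>0 'k)" where
  "mop C x y = lin (\<lambda>a. lin (\<lambda>b. C a b) y) x"

definition tmul :: "('b list \<Rightarrow>\<^sub>0 'k::field) \<Rightarrow> ('b list \<Rightarrow>\<^sub>0 'k) \<Rightarrow> ('b list \<Rightarrow>\<^sub>0 'k)" where
  "tmul U V = lin (\<lambda>u. lin (\<lambda>v. Poly_Mapping.single (u @ v) 1) V) U"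

definition tone :: "('b list \<Rightarrow>\<^sub>0 'k::field)" where
  "tone = Poly_Mapping.single [] 1"

definition tprod :: "('b list \<Rightarrow>\<^sub>0 'k::field) list \<Rightarrow> ('b list \<Rightarrow>\<^sub>0 'k)" where
  "tprod xs = foldr tmul xs tone"

definition iota :: "('b \<Rightarrow>\<^sub>0 'k::field) \<Rightarrow> ('b list \<Rightarrow>\<^sub>0 'k)" where
  "iota y = lin (\<lambda>b. Poly_Mapping.single [b] 1) y"

definition word :: "'b list \<Rightarrow> ('b list \<Rightarrow>\<^sub>0 'k::field)" where
  "word w = Poly_Mapping.single w 1"

text \<open>For a basis letter x, the action x \<rhd> w on a word w: the unique derivation
  of T(M) extending x \<rhd> - on M.\<close>
definition der :: "('b \<Rightarrow> 'b \<Rightarrow> ('b \<Rightarrow>\<^sub>0 'k::field)) \<Rightarrow> 'b \<Rightarrow> 'b list \<Rightarrow> ('b list \<Rightarrow>\<^sub>0 'k)" where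
  "der C x w = (\<Sum>i<length w. tmul (tmul (word (take i w)) (iota (C x (w ! i)))) (word (drop (Suc i) w)))"

definition derT :: "('b \<Rightarrow> 'b \<Rightarrow> ('b \<Rightarrow>\<^sub>0 'k::field)) \<Rightarrow> 'b \<Rightarrow> ('b list \<Rightarrow>\<^sub>0 'k) \<Rightarrow> ('b list \<Rightarrow>\<^sub>0 'k)" where
  "derT C x U = lin (der C x) U"

text \<open>Extension of \<rhd> to T(M): 1 \<rhd> W = W, (xV) \<rhd> W = x \<rhd> (V \<rhd> W) - (x \<rhd> V) \<rhd> W.
  The natural-number argument is the length of the first word (recursion on length;
  x \<rhd> V consists of words of length |V|).\<close>
primrec tri_aux :: "('b \<Rightarrow> 'b \<Rightarrow> ('b \<Rightarrow>\<^sub>0 'k::field)) \<Rightarrow> nat \<Rightarrow> 'b list \<Rightarrow> ('b list \<Rightarrow>\<^sub>0 'k) \<Rightarrow> ('b list \<Rightarrow>\<^sub>0 'k)" where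
  "tri_aux C 0 V W = W"
| "tri_aux C (Suc n) V W =
     (case V of [] \<Rightarrow> W
      | x # V' \<Rightarrow> derT C x (tri_aux C n V' W) - lin (\<lambda>u. tri_aux C n u W) (der C x V'))"

definition triT :: "('b \<Rightarrow> 'b \<Rightarrow> ('b \<Rightarrow>\<^sub>0 'k::field)) \<Rightarrow> ('b list \<Rightarrow>\<^sub>0 'k) \<Rightarrow> ('b list \<Rightarrow>\<^sub>0 'k) \<Rightarrow> ('b list \<Rightarrow>\<^sub>0 'k)" where
  "triT C U W = lin (\<lambda>u. tri_aux C (length u) u W) U"

text \<open>Gavrilov's K-map: K(1) = 1, K(yU) = y K(U) - K(y \<rhd> U) (y a basis letter,
  extended linearly); again the nat argument is the word length.\<close>
primrec K_aux :: "('b \<Rightarrow> 'b \<Rightarrow> ('b \<Rightarrow>\<^sub>0 'k::field)) \<Rightarrow> nat \<Rightarrow> 'b list \<Rightarrow> ('b list \<Rightarrow>\<^sub>0 'k)" where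
  "K_aux C 0 w = word w"
| "K_aux C (Suc n) w =
     (case w of [] \<Rightarrow> tone
      | y # U \<Rightarrow> tmul (word [y]) (K_aux C n U) - lin (\<lambda>u. K_aux C n u) (triT C (word [y]) (word U)))"

definition Kmap :: "('b \<Rightarrow> 'b \<Rightarrow> ('b \<Rightarrow>\<^sub>0 'k::field)) \<Rightarrow> ('b list \<Rightarrow>\<^sub>0 'k) \<Rightarrow> ('b list \<Rightarrow>\<^sub>0 'k)" where
  "Kmap C U = lin (\<lambda>u. K_aux C (length u) u) U"

fun rnest :: "('a \<Rightarrow> 'a \<Rightarrow> 'a) \<Rightarrow> 'a list \<Rightarrow> 'a::zero" where
  "rnest f [] = 0"
| "rnest f [x] = x"
| "rnest f (x # xs) = f x (rnest f xs)"

definition yblock :: "('b \<Rightarrow> 'b \<Rightarrow> ('b \<Rightarrow>\<^sub>0 'k::field)) \<Rightarrow> (nat \<Rightarrow> ('b \<Rightarrow>\<^sub>0 'k)) \<Rightarrow> nat set \<Rightarrow> ('b \<Rightarrow>\<^sub>0 'k)" where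
  "yblock C y B = rnest (mop C) (map y (sorted_list_of_set B))"

text \<open>(y_1 ... y_n)^\<pi> = y_{B_1} ... y_{B_k}, blocks ordered by increasing maxima.\<close>
definition ypart :: "('b \<Rightarrow> 'b \<Rightarrow> ('b \<Rightarrow>\<^sub>0 'k::field)) \<Rightarrow> (nat \<Rightarrow> ('b \<Rightarrow>\<^sub>0 'k)) \<Rightarrow> nat set set \<Rightarrow> ('b list \<Rightarrow>\<^sub>0 'k)" where
  "ypart C y P = tprod (map (\<lambda>B. iota (yblock C y B)) (sorted_key_list_of_set Max P))"

end

theory Submission
  imports Defs
begin

lemma lookup_smul [simp]: "Poly_Mapping.lookup (smul c f) a = c * Poly_Mapping.lookup f a"
  unfolding smul_def by transfer (simp add: when_def)

lemma smul_add: "smul c (f + g) = smul c f + smul c g"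
  by (rule poly_mapping_eqI) (simp add: lookup_add algebra_simps)
lemma smul_add2: "smul (c + d) f = smul c f + smul d f"
  by (rule poly_mapping_eqI) (simp add: lookup_add algebra_simps)
lemma smul_zero [simp]: "smul c 0 = 0"
  by (rule poly_mapping_eqI) simp
lemma smul_zero2 [simp]: "smul 0 f = 0"
  by (rule poly_mapping_eqI) simp
lemma smul_one [simp]: "smul 1 f = f"
  by (rule poly_mapping_eqI) simp
lemma smul_smul [simp]: "smul c (smul d f) = smul (c*d) f"
  by (rule poly_mapping_eqI) simp
lemma smul_diff: "smul c (f - g) = smul c f - smul c g"
  by (rule poly_mapping_eqI) (simp add: lookup_minus algebra_simps)
lemma smul_sum: "smul c (sum F A) = (\<Sum>a\<in>A. smul c (F a))"
  by (induct A rule: infinite_finite_induct) (auto simp: smul_add)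
lemma smul_single: "smul c (Poly_Mapping.single a d) = Poly_Mapping.single a (c*d)"
  by (rule poly_mapping_eqI) (simp add: lookup_single when_def)

lemma lin_alt: "finite S \<Longrightarrow> Poly_Mapping.keys f \<subseteq> S \<Longrightarrow>
   lin F f = (\<Sum>a\<in>S. smul (Poly_Mapping.lookup f a) (F a))"
  unfolding lin_def
  by (rule sum.mono_neutral_left) (auto simp: in_keys_iff)

lemma lin_add: "lin F (f + g) = lin F f + lin F g"
proof -
  let ?S = "Poly_Mapping.keys f \<union> Poly_Mapping.keys g"
  have "Poly_Mapping.keys (f+g) \<subseteq> ?S" by (rule keys_add)
  then show ?thesis
    by (simp add: lin_alt[of ?S] lookup_add smul_add2 sum.distrib)
qed

lemma lin_smul: "lin F (smul c f) = smul c (lin F f)"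
proof -
  have "Poly_Mapping.keys (smul c f) \<subseteq> Poly_Mapping.keys f" by (auto simp: in_keys_iff)
  then show ?thesis
    by (simp add: lin_alt[of "Poly_Mapping.keys f"] smul_sum mult.commute)
qed

lemma lin_zero [simp]: "lin F 0 = 0"
  by (simp add: lin_def)

lemma lin_single [simp]: "lin F (Poly_Mapping.single a c) = smul c (F a)"
  by (simp add: lin_alt[of "{a}"])

lemma lin_diff: "lin F (f - g) = lin F f - lin F g"
  using lin_add[of F "f-g" g] by (simp add: eq_diff_eq)

lemma lin_sum: "lin F (sum G A) = (\<Sum>a\<in>A. lin F (G a))"
  by (induct A rule: infinite_finite_induct) (auto simp: lin_add)

lemma lin_fun_add: "lin (\<lambda>a. F a + G a) f = lin F f + lin G f"
  by (simp add: lin_def smul_add sum.distrib)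
lemma lin_fun_diff: "lin (\<lambda>a. F a - G a) f = lin F f - lin G f"
  by (simp add: lin_def smul_diff sum_subtractf)
lemma lin_fun_zero [simp]: "lin (\<lambda>a. 0) f = 0"
  by (simp add: lin_def)
lemma lin_fun_sum: "lin (\<lambda>a. \<Sum>i\<in>I. F i a) f = (\<Sum>i\<in>I. lin (F i) f)"
  by (simp add: lin_def smul_sum sum.swap[of _ I])
lemma lin_fun_smul: "lin (\<lambda>a. smul c (F a)) f = smul c (lin F f)"
  by (simp add: lin_def smul_sum mult.commute)
lemma lin_cong: "(\<And>a. a \<in> Poly_Mapping.keys f \<Longrightarrow> F a = G a) \<Longrightarrow> lin F f = lin G f"
  by (simp add: lin_def)

lemma lin_id: "lin (\<lambda>a. Poly_Mapping.single a 1) f = f"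
proof (rule poly_mapping_eqI)
  fix k
  show "Poly_Mapping.lookup (lin (\<lambda>a. Poly_Mapping.single a 1) f) k = Poly_Mapping.lookup f k"
  proof -
    have "Poly_Mapping.lookup (lin (\<lambda>a. Poly_Mapping.single a 1) f) k =
       (\<Sum>x\<in>Poly_Mapping.keys f. if x = k then Poly_Mapping.lookup f x else 0)"
      unfolding lin_def lookup_sum by (intro sum.cong) (auto simp: lookup_single when_def)
    also have "\<dots> = Poly_Mapping.lookup f k" by (simp add: sum.delta' in_keys_iff)
    finally show ?thesis .
  qed
qed

definition linear_pm :: "(('a \<Rightarrow>\<^sub>0 'k::field) \<Rightarrow> ('c \<Rightarrow>\<^sub>0 'k)) \<Rightarrow> bool" where
  "linear_pm T \<longleftrightarrow> (\<forall>f g. T (f + g) = T f + T g) \<and> (\<forall>c f. T (smul c f) = smul c (T f))"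

lemma linear_pm_lin [simp]: "linear_pm (lin F)"
  by (simp add: linear_pm_def lin_add lin_smul)

lemma linear_pmD: assumes "linear_pm T"
  shows "T (f + g) = T f + T g" "T (smul c f) = smul c (T f)" "T 0 = 0"
    "T (sum G A) = (\<Sum>a\<in>A. T (G a))" "T (f - g) = T f - T g"
proof -
  show 1: "T (f + g) = T f + T g" "T (smul c f) = smul c (T f)" using assms by (auto simp: linear_pm_def)
  have "T (smul 0 0) = smul 0 (T 0)" using assms by (simp only: linear_pm_def)
  then show 0: "T 0 = 0" by simp
  show "T (sum G A) = (\<Sum>a\<in>A. T (G a))"
    by (induct A rule: infinite_finite_induct) (auto simp: 0 assms[unfolded linear_pm_def])
  show "T (f - g) = T f - T g"
  proof -
    have "T ((f-g)+g) = T (f-g) + T g" using assms by (simp only: linear_pm_def)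
    then show ?thesis by (simp add: eq_diff_eq)
  qed
qed

lemma linear_pm_lin_comm: "linear_pm T \<Longrightarrow> T (lin F f) = lin (\<lambda>a. T (F a)) f"
  unfolding lin_def by (simp add: linear_pmD)

lemma linear_pm_rep: "linear_pm T \<Longrightarrow> T f = lin (\<lambda>a. T (Poly_Mapping.single a 1)) f"
  using linear_pm_lin_comm[of T "\<lambda>a. Poly_Mapping.single a 1" f] by (simp add: lin_id)

lemma linear_pm_eq: "linear_pm T \<Longrightarrow> linear_pm S \<Longrightarrow> (\<And>a. T (Poly_Mapping.single a 1) = S (Poly_Mapping.single a 1))
   \<Longrightarrow> T f = S f"
  by (simp add: linear_pm_rep[of T f] linear_pm_rep[of S f])

lemma linear_pm_eq_on: "linear_pm T \<Longrightarrow> linear_pm S \<Longrightarrow> (\<And>a. a \<in> Poly_Mapping.keys f \<Longrightarrow> T (Poly_Mapping.single a 1) = S (Poly_Mapping.single a 1))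
   \<Longrightarrow> T f = S f"
  by (simp add: linear_pm_rep[of T f] linear_pm_rep[of S f] cong: lin_cong)

lemma linear_pm_comp: "linear_pm T \<Longrightarrow> linear_pm S \<Longrightarrow> linear_pm (\<lambda>x. T (S x))"
  by (simp add: linear_pm_def)
lemma linear_pm_add: "linear_pm T \<Longrightarrow> linear_pm S \<Longrightarrow> linear_pm (\<lambda>x. T x + S x)"
  by (simp add: linear_pm_def smul_add algebra_simps)
lemma linear_pm_diff: "linear_pm T \<Longrightarrow> linear_pm S \<Longrightarrow> linear_pm (\<lambda>x. T x - S x)"
  by (simp add: linear_pm_def smul_diff algebra_simps)
lemma linear_pm_id: "linear_pm (\<lambda>x. x)"
  by (simp add: linear_pm_def)


lemma tone_word: "tone = word []" by (simp add: tone_def word_def)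

lemma linear_tmul1: "linear_pm (\<lambda>U. tmul U V)"
  unfolding tmul_def by simp

lemma linear_tmul2: "linear_pm (\<lambda>V. tmul U V)"
  unfolding tmul_def linear_pm_def by (simp add: lin_add lin_smul lin_fun_add lin_fun_smul)

lemma tmul_word_left: "tmul (word u) V = lin (\<lambda>v. word (u @ v)) V"
  by (simp add: tmul_def word_def)

lemma tmul_word [simp]: "tmul (word u) (word v) = word (u @ v)"
  by (simp add: tmul_word_left) (simp add: word_def)

lemma tmul_assoc: "tmul (tmul A B) D = tmul A (tmul B D)"
proof -
  have l1: "linear_pm (\<lambda>A. tmul (tmul A B) D)" "linear_pm (\<lambda>A. tmul A (tmul B D))"
    by (auto intro: linear_pm_comp linear_tmul1)
  show ?thesis
  proof (rule linear_pm_eq[OF l1])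
    fix a
    have l2: "linear_pm (\<lambda>B. tmul (tmul (word a) B) D)" "linear_pm (\<lambda>B. tmul (word a) (tmul B D))"
      by (auto intro: linear_pm_comp linear_tmul1 linear_tmul2)
    show "tmul (tmul (Poly_Mapping.single a 1) B) D = tmul (Poly_Mapping.single a 1) (tmul B D)"
      unfolding word_def[symmetric]
    proof (rule linear_pm_eq[OF l2])
      fix b
      have l3: "linear_pm (\<lambda>D. tmul (tmul (word a) (word b)) D)" "linear_pm (\<lambda>D. tmul (word a) (tmul (word b) D))"
        by (auto intro: linear_pm_comp linear_tmul1 linear_tmul2)
      show "tmul (tmul (word a) (Poly_Mapping.single b 1)) D = tmul (word a) (tmul (Poly_Mapping.single b 1) D)"
        unfolding word_def[symmetric]
        by (rule linear_pm_eq[OF l3]) (simp add: word_def[symmetric])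
    qed
  qed
qed

lemma tmul_tone_left [simp]: "tmul tone V = V"
  by (simp add: tone_word tmul_word_left) (simp add: word_def lin_id)

lemma tmul_tone_right [simp]: "tmul V tone = V"
  using linear_pm_eq[OF linear_tmul1[of tone] linear_pm_id, of V]
  by (simp add: tone_word word_def[symmetric])

lemmas tmul_lin1 = linear_pmD[OF linear_tmul1] and tmul_lin2 = linear_pmD[OF linear_tmul2]

lemma tprod_Nil [simp]: "tprod [] = tone" by (simp add: tprod_def)
lemma tprod_Cons [simp]: "tprod (x # xs) = tmul x (tprod xs)" by (simp add: tprod_def)

lemma linear_iota: "linear_pm iota"
  unfolding iota_def[abs_def] by simp

lemma iota_lin: "iota y = lin (\<lambda>b. word [b]) y"
  by (simp add: iota_def word_def)

lemma linear_derT: "linear_pm (derT C x)"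
  unfolding derT_def[abs_def] by simp

lemma derT_word: "derT C x (word w) = der C x w"
  by (simp add: derT_def word_def)

lemma sum_lessThan_add_split:
  "(\<Sum>i<m+n. f i) = (\<Sum>i<m. f i) + (\<Sum>j<n. f (m+j))" for f :: "nat \<Rightarrow> 'a::comm_monoid_add"
  by (induct n) (auto simp: add.assoc)

lemma der_append: "der C x (u @ v) = tmul (der C x u) (word v) + tmul (word u) (der C x v)"
proof -
  define t where "t w i = tmul (tmul (word (take i w)) (iota (C x (w ! i)))) (word (drop (Suc i) w))" for w i
  have d: "der C x w = (\<Sum>i<length w. t w i)" for w by (simp add: der_def t_def)
  have A: "t (u @ v) i = tmul (t u i) (word v)" if "i < length u" for i
    using that by (simp add: t_def tmul_assoc nth_append)
  have B: "t (u @ v) (length u + j) = tmul (word u) (t v j)" for j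
    by (simp add: t_def nth_append, subst tmul_word[symmetric], simp only: tmul_assoc)
  have "der C x (u @ v) = (\<Sum>i<length u. t (u@v) i) + (\<Sum>j<length v. t (u@v) (length u + j))"
    by (simp add: d sum_lessThan_add_split)
  also have "\<dots> = tmul (der C x u) (word v) + tmul (word u) (der C x v)"
    by (simp add: A B d tmul_lin1 tmul_lin2)
  finally show ?thesis .
qed

lemma derT_tmul: "derT C x (tmul U V) = tmul (derT C x U) V + tmul U (derT C x V)"
proof -
  have l1: "linear_pm (\<lambda>U. derT C x (tmul U V))" "linear_pm (\<lambda>U. tmul (derT C x U) V + tmul U (derT C x V))"
    by (rule linear_pm_comp[OF linear_derT linear_tmul1])
      (rule linear_pm_add[OF linear_pm_comp[OF linear_tmul1 linear_derT] linear_tmul1])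
  show ?thesis
  proof (rule linear_pm_eq[OF l1])
    fix a
    have l2: "linear_pm (\<lambda>V. derT C x (tmul (word a) V))" "linear_pm (\<lambda>V. tmul (derT C x (word a)) V + tmul (word a) (derT C x V))"
      by (rule linear_pm_comp[OF linear_derT linear_tmul2])
        (rule linear_pm_add[OF linear_tmul2 linear_pm_comp[OF linear_tmul2 linear_derT]])
    show "derT C x (tmul (Poly_Mapping.single a 1) V) = tmul (derT C x (Poly_Mapping.single a 1)) V + tmul (Poly_Mapping.single a 1) (derT C x V)"
      unfolding word_def[symmetric]
      by (rule linear_pm_eq[OF l2]) (simp add: word_def[symmetric] derT_word der_append)
  qed
qed

lemma der_single: "der C x [b] = iota (C x b)"
  by (simp add: der_def tone_word[symmetric])

lemma derT_iota: "derT C x (iota z) = iota (lin (C x) z)"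
proof -
  have "derT C x (iota z) = lin (\<lambda>b. derT C x (word [b])) z"
    by (simp add: iota_lin linear_pm_lin_comm[OF linear_derT])
  also have "\<dots> = lin (\<lambda>b. iota (C x b)) z" by (simp add: derT_word der_single)
  also have "\<dots> = iota (lin (C x) z)" by (simp add: linear_pm_lin_comm[OF linear_iota])
  finally show ?thesis .
qed

lemma derT_tone: "derT C x tone = 0"
  by (simp add: tone_word derT_word der_def)

definition dv :: "('b \<Rightarrow> 'b \<Rightarrow> ('b \<Rightarrow>\<^sub>0 'k::field)) \<Rightarrow> ('b \<Rightarrow>\<^sub>0 'k) \<Rightarrow> ('b list \<Rightarrow>\<^sub>0 'k) \<Rightarrow> ('b list \<Rightarrow>\<^sub>0 'k)" where
  "dv C z V = lin (\<lambda>x. derT C x V) z"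

lemma linear_dv: "linear_pm (dv C z)"
  unfolding dv_def[abs_def] linear_pm_def
  by (simp add: linear_pmD[OF linear_derT] lin_fun_add lin_fun_smul)

lemma dv_tmul: "dv C z (tmul U V) = tmul (dv C z U) V + tmul U (dv C z V)"
  by (simp add: dv_def derT_tmul lin_fun_add linear_pm_lin_comm[OF linear_tmul1] linear_pm_lin_comm[OF linear_tmul2])

lemma dv_iota: "dv C z (iota w) = iota (mop C z w)"
  by (simp add: dv_def derT_iota mop_def linear_pm_lin_comm[OF linear_iota])

lemma dv_tone: "dv C z tone = 0"
  by (simp add: dv_def derT_tone)


definition homog :: "nat \<Rightarrow> ('b list \<Rightarrow>\<^sub>0 'k::field) \<Rightarrow> bool" where
  "homog n U \<longleftrightarrow> (\<forall>u\<in>Poly_Mapping.keys U. length u = n)"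

lemma homog_zero [simp]: "homog n 0" by (simp add: homog_def)
lemma homog_add: "homog n U \<Longrightarrow> homog n V \<Longrightarrow> homog n (U + V)"
  using keys_add[of U V] by (auto simp: homog_def)
lemma homog_smul: "homog n U \<Longrightarrow> homog n (smul c U)"
  by (auto simp: homog_def in_keys_iff)
lemma homog_sum: "(\<And>a. a \<in> A \<Longrightarrow> homog n (F a)) \<Longrightarrow> homog n (sum F A)"
  by (induct A rule: infinite_finite_induct) (auto intro: homog_add)
lemma homog_lin: "(\<And>a. a \<in> Poly_Mapping.keys f \<Longrightarrow> homog n (F a)) \<Longrightarrow> homog n (lin F f)"
  unfolding lin_def by (auto intro!: homog_sum homog_smul)
lemma homog_word: "homog (length w) (word w)"
  by (simp add: homog_def word_def)
lemma homog_tmul: "homog m U \<Longrightarrow> homog k V \<Longrightarrow> homog (m + k) (tmul U V)"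
  unfolding tmul_def
  by (rule homog_lin, rule homog_lin) (auto simp: homog_def)
lemma homog_iota: "homog 1 (iota z)"
  unfolding iota_def by (rule homog_lin) (simp add: homog_def)

lemma homog_der: "homog (length w) (der C x w)"
  unfolding der_def
proof (rule homog_sum)
  fix i assume "i \<in> {..<length w}"
  then have e: "length w = (i + 1) + (length w - Suc i)" by simp
  show "homog (length w) (tmul (tmul (word (take i w)) (iota (C x (w ! i)))) (word (drop (Suc i) w)))"
    apply (subst e)
    apply (rule homog_tmul)
    using homog_tmul[OF homog_word[of "take i w"] homog_iota[of "C x (w ! i)"]] \<open>i \<in> _\<close>
     apply (simp add: min_def)
    using homog_word[of "drop (Suc i) w"] by simp
qed

lemma linear_Kmap: "linear_pm (Kmap C)"
  unfolding Kmap_def[abs_def] by simp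

lemma K_word: "Kmap C (word w) = K_aux C (length w) w"
  by (simp add: Kmap_def word_def)

lemma triT_single: "triT C (word [x]) (word w) = derT C x (word w)"
  by (simp add: triT_def word_def der_def)

lemma K_cons: "Kmap C (word (x # w)) = tmul (word [x]) (Kmap C (word w)) - Kmap C (derT C x (word w))"
proof -
  have "lin (K_aux C (length w)) (der C x w) = Kmap C (der C x w)"
    unfolding Kmap_def
    by (rule lin_cong) (use homog_der[of w C x] in \<open>auto simp: homog_def\<close>)
  then show ?thesis
    by (simp add: K_word triT_single derT_word)
qed

lemma K_tmul: "Kmap C (tmul (word [x]) V) = tmul (word [x]) (Kmap C V) - Kmap C (derT C x V)"
proof -
  have l: "linear_pm (\<lambda>V. Kmap C (tmul (word [x]) V))" "linear_pm (\<lambda>V. tmul (word [x]) (Kmap C V) - Kmap C (derT C x V))"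
    by (rule linear_pm_comp[OF linear_Kmap linear_tmul2])
      (rule linear_pm_diff[OF linear_pm_comp[OF linear_tmul2 linear_Kmap] linear_pm_comp[OF linear_Kmap linear_derT]])
  show ?thesis
    by (rule linear_pm_eq[OF l]) (simp add: word_def[symmetric] K_cons)
qed

fun Lw :: "('b \<Rightarrow> 'b \<Rightarrow> ('b \<Rightarrow>\<^sub>0 'k::field)) \<Rightarrow> 'b list \<Rightarrow> ('b list \<Rightarrow>\<^sub>0 'k)" where
  "Lw C [] = tone"
| "Lw C (x # w) = tmul (word [x]) (Lw C w) + derT C x (Lw C w)"

definition Lmap :: "('b \<Rightarrow> 'b \<Rightarrow> ('b \<Rightarrow>\<^sub>0 'k::field)) \<Rightarrow> ('b list \<Rightarrow>\<^sub>0 'k) \<Rightarrow> ('b list \<Rightarrow>\<^sub>0 'k)" where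
  "Lmap C U = lin (Lw C) U"

lemma linear_Lmap: "linear_pm (Lmap C)"
  unfolding Lmap_def[abs_def] by simp

lemma L_word: "Lmap C (word w) = Lw C w"
  by (simp add: Lmap_def word_def)

lemma L_tmul: "Lmap C (tmul (word [x]) V) = tmul (word [x]) (Lmap C V) + derT C x (Lmap C V)"
proof -
  have l: "linear_pm (\<lambda>V. Lmap C (tmul (word [x]) V))" "linear_pm (\<lambda>V. tmul (word [x]) (Lmap C V) + derT C x (Lmap C V))"
    by (rule linear_pm_comp[OF linear_Lmap linear_tmul2])
      (rule linear_pm_add[OF linear_pm_comp[OF linear_tmul2 linear_Lmap] linear_pm_comp[OF linear_derT linear_Lmap]])
  show ?thesis
    by (rule linear_pm_eq[OF l]) (simp add: word_def[symmetric] L_word)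
qed

lemma KL_word: "Kmap C (Lw C w) = word w"
proof (induct w)
  case Nil
  then show ?case by (simp add: tone_word K_word)
next
  case (Cons x w)
  have "Kmap C (Lw C (x # w)) = Kmap C (tmul (word [x]) (Lw C w)) + Kmap C (derT C x (Lw C w))"
    by (simp add: linear_pmD[OF linear_Kmap])
  also have "\<dots> = word (x # w)"
    by (simp add: K_tmul Cons)
  finally show ?case .
qed

lemma KL: "Kmap C (Lmap C U) = U"
  using linear_pm_eq[OF linear_pm_comp[OF linear_Kmap linear_Lmap] linear_pm_id, of C C U]
  by (simp add: word_def[symmetric] L_word KL_word)

lemma LK_word: "Lmap C (Kmap C (word w)) = word w"
proof (induct "length w" arbitrary: w rule: less_induct)
  case less
  show ?case
  proof (cases w)
    case Nil
    then show ?thesis by (simp add: K_word L_word tone_word)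
  next
    case (Cons x v)
    have IH: "Lmap C (Kmap C (der C x v)) = der C x v"
    proof (rule linear_pm_eq_on[OF linear_pm_comp[OF linear_Lmap linear_Kmap] linear_pm_id])
      fix a assume "a \<in> Poly_Mapping.keys (der C x v)"
      then have "length a = length v" using homog_der[of v C x] by (auto simp: homog_def)
      then show "Lmap C (Kmap C (Poly_Mapping.single a 1)) = Poly_Mapping.single a 1"
        using less[of a] Cons by (simp add: word_def)
    qed
    have IH2: "Lmap C (Kmap C (word v)) = word v" using less[of v] Cons by simp
    have "Lmap C (Kmap C (word w)) = Lmap C (tmul (word [x]) (Kmap C (word v))) - Lmap C (Kmap C (der C x v))"
      by (simp add: Cons K_cons derT_word linear_pmD[OF linear_Lmap])
    also have "\<dots> = word w"
      by (simp add: L_tmul IH IH2 derT_word Cons)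
    finally show ?thesis .
  qed
qed

lemma LK: "Lmap C (Kmap C U) = U"
  using linear_pm_eq[OF linear_pm_comp[OF linear_Lmap linear_Kmap] linear_pm_id, of C C U]
  by (simp add: word_def[symmetric] LK_word)

lemma inv_Kmap: "inv (Kmap C) U = Lmap C U"
proof (rule inv_f_eq)
  show "inj (Kmap C)" by (metis LK injI)
  show "Kmap C (Lmap C U) = U" by (rule KL)
qed

lemma L_tmul_iota: "Lmap C (tmul (iota z) V) = tmul (iota z) (Lmap C V) + dv C z (Lmap C V)"
proof -
  have "tmul (iota z) V = lin (\<lambda>b. tmul (word [b]) V) z"
    by (simp add: iota_lin linear_pm_lin_comm[OF linear_tmul1])
  then have "Lmap C (tmul (iota z) V) = lin (\<lambda>b. tmul (word [b]) (Lmap C V) + derT C b (Lmap C V)) z"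
    by (simp add: linear_pm_lin_comm[OF linear_Lmap] L_tmul)
  also have "\<dots> = tmul (iota z) (Lmap C V) + dv C z (Lmap C V)"
    by (simp add: lin_fun_add dv_def iota_lin linear_pm_lin_comm[OF linear_tmul1])
  finally show ?thesis .
qed


lemma part_iff: "partition_on A P \<longleftrightarrow> \<Union>P = A \<and> (\<forall>X\<in>P. \<forall>Y\<in>P. X \<noteq> Y \<longrightarrow> X \<inter> Y = {}) \<and> {} \<notin> P"
  by (simp add: partition_on_def disjoint_def)

lemma part_block: "partition_on A P \<Longrightarrow> X \<in> P \<Longrightarrow> X \<subseteq> A \<and> X \<noteq> {}"
  by (auto simp: part_iff)

lemma part_inj_Max: assumes "partition_on A P" "finite A" shows "inj_on Max P"
proof (rule inj_onI)
  fix X Y assume XY: "X \<in> P" "Y \<in> P" "Max X = Max Y"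
  have "finite X" "X \<noteq> {}" "finite Y" "Y \<noteq> {}"
    using part_block[OF assms(1)] XY assms(2) by (auto intro: finite_subset)
  then have "Max X \<in> X \<inter> Y" using XY(3) Max_in by (metis IntI)
  then show "X = Y" using assms(1) XY by (auto simp: part_iff)
qed

lemma parts_insert1: assumes "partition_on A Q" "a \<notin> A"
  shows "partition_on (insert a A) (insert {a} Q)"
proof -
  have "\<Union>Q = A" using assms(1) by (simp add: partition_on_def)
  then have "disjnt {a} (\<Union>Q)" using assms(2) by (simp add: disjnt_def)
  moreover have "insert a A - {a} = A" using assms(2) by simp
  ultimately show ?thesis using assms(1) by (simp add: partition_on_insert)
qed

lemma parts_insert2: assumes "partition_on A Q" "a \<notin> A" "B \<in> Q"
  shows "partition_on (insert a A) (insert (insert a B) (Q - {B}))"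
proof -
  have U: "\<Union>Q = A" and D: "\<And>X Y. X \<in> Q \<Longrightarrow> Y \<in> Q \<Longrightarrow> X \<noteq> Y \<Longrightarrow> X \<inter> Y = {}" and E: "{} \<notin> Q"
    using assms(1) unfolding part_iff by blast+
  have na: "a \<notin> Y" if "Y \<in> Q" for Y using that U assms(2) by blast
  have "disjnt (insert a B) (\<Union>(Q - {B}))"
    unfolding disjnt_def using D[OF assms(3)] na assms(3) by blast
  moreover have "partition_on (insert a A - insert a B) (Q - {B})"
    unfolding part_iff
  proof (intro conjI)
    show "\<Union>(Q - {B}) = insert a A - insert a B"
      using U D[OF assms(3)] na assms(3) by blast
    show "\<forall>X\<in>Q - {B}. \<forall>Y\<in>Q - {B}. X \<noteq> Y \<longrightarrow> X \<inter> Y = {}" using D by blast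
    show "{} \<notin> Q - {B}" using E by blast
  qed
  moreover have "insert a B \<subseteq> insert a A" using U assms(3) by blast
  ultimately show ?thesis by (simp add: partition_on_insert)
qed

lemma parts_split:
  fixes f :: "nat set set \<Rightarrow> 'a::comm_monoid_add"
  assumes A: "finite A" "a \<notin> A"
  shows "(\<Sum>P\<in>{P. partition_on (insert a A) P}. f P)
     = (\<Sum>Q\<in>{Q. partition_on A Q}. f (insert {a} Q) + (\<Sum>B\<in>Q. f (insert (insert a B) (Q - {B}))))"
proof -
  define PA where "PA = {Q. partition_on A Q}"
  define Pa where "Pa = {P. partition_on (insert a A) P}"
  define p1 where "p1 Q = insert {a} Q" for Q :: "nat set set"
  define p2 where "p2 = (\<lambda>(Q, B). insert (insert a B) (Q - {B}))"
  define SG where "SG = Sigma PA (\<lambda>Q. Q)"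
  have finPA: "finite PA" unfolding PA_def by (rule finitely_many_partition_on[OF A(1)])
  have finQ: "finite Q" if "Q \<in> PA" for Q using that finite_elements[OF A(1)] by (auto simp: PA_def)
  have finSG: "finite SG" unfolding SG_def using finPA finQ by auto
  have noa: "a \<notin> X" if "Q \<in> PA" "X \<in> Q" for Q X
    using that part_block[of A Q X] A by (auto simp: PA_def)
  have ne: "X \<noteq> {}" if "Q \<in> PA" "X \<in> Q" for Q X
    using that part_block[of A Q X] by (auto simp: PA_def)
  have sub1: "p1 ` PA \<subseteq> Pa" unfolding p1_def PA_def Pa_def using parts_insert1 A by auto
  have sub2: "p2 ` SG \<subseteq> Pa" unfolding p2_def SG_def PA_def Pa_def using parts_insert2 A by auto
  have sup: "Pa \<subseteq> p1 ` PA \<union> p2 ` SG"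
  proof
    fix P assume "P \<in> Pa"
    then have P: "partition_on (insert a A) P" by (simp add: Pa_def)
    have "a \<in> \<Union>P" using P by (simp add: partition_on_def)
    then obtain X where X: "X \<in> P" "a \<in> X" by blast
    have Xsub: "X \<subseteq> insert a A" "X \<noteq> {}" using part_block[OF P X(1)] by auto
    have P': "\<Union>P = insert a A \<and> (\<forall>X\<in>P. \<forall>Y\<in>P. X \<noteq> Y \<longrightarrow> X \<inter> Y = {}) \<and> {} \<notin> P"
      using P unfolding part_iff by assumption
    have UP: "\<Union>P = insert a A" using P' by (rule conjunct1)
    have PE: "{} \<notin> P" using P' by blast
    have PD: "\<And>X Y. X \<in> P \<Longrightarrow> Y \<in> P \<Longrightarrow> X \<noteq> Y \<Longrightarrow> X \<inter> Y = {}"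
      using P' by blast
    have disj: "X \<inter> Y = {}" if "Y \<in> P" "Y \<noteq> X" for Y using PD[OF X(1) that(1)] that(2) by blast
    show "P \<in> p1 ` PA \<union> p2 ` SG"
    proof (cases "X = {a}")
      case True
      have "partition_on A (P - {X})"
        unfolding part_iff
      proof (intro conjI)
        show "\<Union>(P - {X}) = A"
        proof
          show "\<Union>(P - {X}) \<subseteq> A"
          proof
            fix z assume "z \<in> \<Union>(P - {X})"
            then obtain Y where Y: "Y \<in> P" "Y \<noteq> X" "z \<in> Y" by blast
            have "z \<in> insert a A" using UP Y by blast
            moreover have "z \<noteq> a" using disj[OF Y(1,2)] X(2) Y(3) by blast
            ultimately show "z \<in> A" by blast
          qed
          show "A \<subseteq> \<Union>(P - {X})"
          proof
            fix z assume "z \<in> A"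
            then obtain Y where Y: "Y \<in> P" "z \<in> Y" using UP by blast
            have "Y \<noteq> X" using True A(2) Y(2) \<open>z \<in> A\<close> by blast
            then show "z \<in> \<Union>(P - {X})" using Y by blast
          qed
        qed
        show "\<forall>X'\<in>P - {X}. \<forall>Y\<in>P - {X}. X' \<noteq> Y \<longrightarrow> X' \<inter> Y = {}" using PD by blast
        show "{} \<notin> P - {X}" using PE by blast
      qed
      moreover have "P = p1 (P - {X})" using X True by (auto simp: p1_def)
      ultimately show ?thesis by (auto simp: PA_def)
    next
      case False
      define B where "B = X - {a}"
      have Bne: "B \<noteq> {}" using False X unfolding B_def by blast
      define Q where "Q = insert B (P - {X})"
      have BnP: "B \<notin> P - {X}"
      proof
        assume "B \<in> P - {X}"
        then have "X \<inter> B = {}" using disj by auto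
        then show False using Bne by (auto simp: B_def)
      qed
      have "partition_on A Q"
        unfolding part_iff
      proof (intro conjI)
        show "\<Union>Q = A"
        proof
          show "\<Union>Q \<subseteq> A"
          proof
            fix z assume "z \<in> \<Union>Q"
            then obtain Y where "Y \<in> Q" "z \<in> Y" by auto
            then show "z \<in> A"
            proof (cases "Y = B")
              case True then show ?thesis using \<open>z \<in> Y\<close> Xsub by (auto simp: B_def)
            next
              case False
              then have Y: "Y \<in> P" "Y \<noteq> X" using \<open>Y \<in> Q\<close> by (auto simp: Q_def)
              have "z \<in> insert a A" using UP Y \<open>z \<in> Y\<close> by blast
              moreover have "z \<noteq> a" using disj[OF Y] X(2) \<open>z \<in> Y\<close> by blast
              ultimately show ?thesis by blast
            qed
          qed
          show "A \<subseteq> \<Union>Q"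
          proof
            fix z assume "z \<in> A"
            then have "z \<noteq> a" using A by auto
            obtain Y where "Y \<in> P" "z \<in> Y" using UP \<open>z \<in> A\<close> by blast
            then show "z \<in> \<Union>Q" using \<open>z \<noteq> a\<close> by (cases "Y = X") (auto simp: Q_def B_def)
          qed
        qed
        show "\<forall>X'\<in>Q. \<forall>Y\<in>Q. X' \<noteq> Y \<longrightarrow> X' \<inter> Y = {}"
          unfolding Q_def using disj PD by (auto simp: B_def)
        show "{} \<notin> Q" using Bne PE by (auto simp: Q_def)
      qed
      moreover have "B \<in> Q" by (simp add: Q_def)
      moreover have "P = p2 (Q, B)"
      proof -
        have "insert a B = X" using X by (auto simp: B_def)
        moreover have "Q - {B} = P - {X}" using BnP by (auto simp: Q_def)
        ultimately show ?thesis using X by (auto simp: p2_def)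
      qed
      ultimately show ?thesis by (auto simp: SG_def PA_def)
    qed
  qed
  have Pa_eq: "Pa = p1 ` PA \<union> p2 ` SG" using sub1 sub2 sup by blast
  have disjI: "p1 ` PA \<inter> p2 ` SG = {}"
  proof -
    have "{a} \<in> p1 Q" for Q by (simp add: p1_def)
    moreover have "{a} \<notin> p2 z" if "z \<in> SG" for z
    proof -
      obtain Q B where z: "z = (Q, B)" "Q \<in> PA" "B \<in> Q" using \<open>z \<in> SG\<close> by (auto simp: SG_def)
      have "insert a B \<noteq> {a}" using noa[OF z(2,3)] ne[OF z(2,3)] by blast
      moreover have "{a} \<notin> Q" using noa[OF z(2)] by blast
      ultimately show ?thesis by (auto simp: p2_def z(1))
    qed
    ultimately show ?thesis by blast
  qed
  have inj1: "inj_on p1 PA"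
  proof (rule inj_onI)
    fix Q1 Q2 assume "Q1 \<in> PA" "Q2 \<in> PA" "p1 Q1 = p1 Q2"
    moreover have "{a} \<notin> Q1" "{a} \<notin> Q2" using noa \<open>Q1 \<in> PA\<close> \<open>Q2 \<in> PA\<close> by blast+
    ultimately show "Q1 = Q2" unfolding p1_def by (metis insert_ident)
  qed
  have inj2: "inj_on p2 SG"
  proof (rule inj_onI)
    fix z1 z2 assume "z1 \<in> SG" "z2 \<in> SG" and eq: "p2 z1 = p2 z2"
    obtain Q1 B1 where z1: "z1 = (Q1, B1)" "Q1 \<in> PA" "B1 \<in> Q1" using \<open>z1 \<in> SG\<close> by (auto simp: SG_def)
    obtain Q2 B2 where z2: "z2 = (Q2, B2)" "Q2 \<in> PA" "B2 \<in> Q2" using \<open>z2 \<in> SG\<close> by (auto simp: SG_def)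
    have eq': "insert (insert a B1) (Q1 - {B1}) = insert (insert a B2) (Q2 - {B2})"
      using eq by (simp add: p2_def z1 z2)
    have n1: "insert a B1 \<notin> Q2 - {B2}" "insert a B2 \<notin> Q1 - {B1}"
      using noa[OF z2(2)] noa[OF z1(2)] by blast+
    have "insert a B1 = insert a B2" using eq' n1 by blast
    then have BB: "B1 = B2" using noa[OF z1(2,3)] noa[OF z2(2,3)] by (metis Diff_insert_absorb)
    have "Q1 - {B1} = Q2 - {B2}"
      using eq' n1 BB by (metis insert_ident)
    then have "Q1 = Q2" using BB z1(3) z2(3) by blast
    then show "z1 = z2" using BB z1 z2 by simp
  qed
  have "(\<Sum>P\<in>Pa. f P) = (\<Sum>P\<in>p1 ` PA. f P) + (\<Sum>P\<in>p2 ` SG. f P)"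
    unfolding Pa_eq by (rule sum.union_disjoint) (use finPA finSG disjI in auto)
  also have "\<dots> = (\<Sum>Q\<in>PA. f (p1 Q)) + (\<Sum>z\<in>SG. f (p2 z))"
    by (simp add: sum.reindex[OF inj1] sum.reindex[OF inj2])
  also have "(\<Sum>z\<in>SG. f (p2 z)) = (\<Sum>Q\<in>PA. \<Sum>B\<in>Q. f (insert (insert a B) (Q - {B})))"
    unfolding SG_def p2_def using finPA finQ by (simp add: sum.Sigma split_def)
  finally show ?thesis
    by (simp add: Pa_def PA_def p1_def sum.distrib)
qed


context linorder begin
lemma skl_unique_cls:
  assumes "inj_on f S" "finite S"
  shows "sorted_key_list_of_set f S = l \<longleftrightarrow> sorted_wrt (<) (map f l) \<and> set l = S \<and> length l = card S"
proof -
  interpret folding_insort_key "(\<le>)" "(<)" S f by unfold_locales (fact assms(1))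
  show ?thesis using sorted_key_list_of_set_unique[of S l] assms(2) by auto
qed
end

lemma skl_unique:
  fixes f :: "'a \<Rightarrow> nat"
  assumes "inj_on f S" "finite S"
  shows "sorted_key_list_of_set f S = l \<longleftrightarrow> sorted_wrt (<) (map f l) \<and> set l = S \<and> length l = card S"
  by (rule skl_unique_cls[OF assms])

lemma skl_props:
  fixes f :: "'a \<Rightarrow> nat"
  assumes "inj_on f S" "finite S"
  shows "sorted_wrt (<) (map f (sorted_key_list_of_set f S)) \<and> set (sorted_key_list_of_set f S) = S
     \<and> length (sorted_key_list_of_set f S) = card S"
  using skl_unique[OF assms, of "sorted_key_list_of_set f S"] by simp

lemma block_facts:
  assumes "partition_on (A::nat set) Q" "finite A" "\<forall>x\<in>A. a < x" "X \<in> Q"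
  shows "finite X" "X \<noteq> {}" "\<forall>b\<in>X. a < b" "a < Max X" "a \<notin> X"
proof -
  have s: "X \<subseteq> A" "X \<noteq> {}" using part_block[OF assms(1,4)] by auto
  show f: "finite X" using s(1) assms(2) by (rule finite_subset)
  show "X \<noteq> {}" by (rule s(2))
  show b: "\<forall>b\<in>X. a < b" using s assms(3) by blast
  show "a < Max X" using b Max_in[OF f s(2)] by blast
  show "a \<notin> X" using b by blast
qed

lemma SL1:
  assumes "partition_on (A::nat set) Q" "finite A" "\<forall>x\<in>A. a < x"
  shows "sorted_key_list_of_set Max (insert {a} Q) = {a} # sorted_key_list_of_set Max Q"
proof -
  have aA: "a \<notin> A" using assms(3) by blast
  have p2: "partition_on (insert a A) (insert {a} Q)" by (rule parts_insert1[OF assms(1) aA])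
  have inj1: "inj_on Max Q" by (rule part_inj_Max[OF assms(1,2)])
  have inj2: "inj_on Max (insert {a} Q)" by (rule part_inj_Max[OF p2]) (use assms(2) in simp)
  have finQ: "finite Q" by (rule finite_elements[OF assms(2,1)])
  have aQ: "{a} \<notin> Q" using block_facts[OF assms] by blast
  have L: "sorted_wrt (<) (map Max (sorted_key_list_of_set Max Q))" "set (sorted_key_list_of_set Max Q) = Q"
     "length (sorted_key_list_of_set Max Q) = card Q" using skl_props[OF inj1 finQ] by auto
  have M: "\<forall>X\<in>Q. a < Max X" using block_facts[OF assms] by blast
  show ?thesis
    by (subst skl_unique[OF inj2]) (use finQ L M aQ in \<open>auto simp: card_insert_if\<close>)
qed

lemma SL2:
  assumes "partition_on (A::nat set) Q" "finite A" "\<forall>x\<in>A. a < x" "B \<in> Q"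
  shows "sorted_key_list_of_set Max (insert (insert a B) (Q - {B}))
       = map (\<lambda>X. if X = B then insert a B else X) (sorted_key_list_of_set Max Q)"
proof -
  have aA: "a \<notin> A" using assms(3) by blast
  have p2: "partition_on (insert a A) (insert (insert a B) (Q - {B}))" by (rule parts_insert2[OF assms(1) aA assms(4)])
  have inj1: "inj_on Max Q" by (rule part_inj_Max[OF assms(1,2)])
  have inj2: "inj_on Max (insert (insert a B) (Q - {B}))" by (rule part_inj_Max[OF p2]) (use assms(2) in simp)
  have finQ: "finite Q" by (rule finite_elements[OF assms(2,1)])
  have L: "sorted_wrt (<) (map Max (sorted_key_list_of_set Max Q))" "set (sorted_key_list_of_set Max Q) = Q"
     "length (sorted_key_list_of_set Max Q) = card Q" using skl_props[OF inj1 finQ] by auto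
  note bf = block_facts[OF assms(1,2,3,4)]
  have MB: "Max (insert a B) = Max B" using bf by (simp add: Max_insert max_def less_imp_le)
  have mm: "map Max (map (\<lambda>X. if X = B then insert a B else X) (sorted_key_list_of_set Max Q))
      = map Max (sorted_key_list_of_set Max Q)" by (auto simp: MB)
  have nin: "insert a B \<notin> Q - {B}" using block_facts[OF assms(1,2,3)] by blast
  have cQ: "card (insert (insert a B) (Q - {B})) = card Q"
    using nin finQ assms(4) by (simp add: card_insert_if card_Diff_singleton card_gt_0_iff)
       (metis Suc_pred card_gt_0_iff emptyE finQ)
  have st: "set (map (\<lambda>X. if X = B then insert a B else X) (sorted_key_list_of_set Max Q)) = insert (insert a B) (Q - {B})"
    using L(2) assms(4) by auto
  show ?thesis
    apply (subst skl_unique[OF inj2])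
     apply (simp add: finQ)
    apply (intro conjI)
      apply (subst mm, rule L(1))
     apply (rule st)
    apply (simp only: cQ length_map L(3))
    done
qed

lemma yblock_single: "yblock C y {a} = y a" by (simp add: yblock_def)

lemma yblock_insert:
  assumes "finite B" "B \<noteq> {}" "\<forall>b\<in>B. a < b"
  shows "yblock C y (insert a B) = mop C (y a) (yblock C y B)"
proof -
  have aB: "a \<notin> B" using assms(3) by blast
  have "Min (insert a B) = a" by (rule Min_eqI) (use assms in \<open>auto simp: less_imp_le\<close>)
  then have s: "sorted_list_of_set (insert a B) = a # sorted_list_of_set B"
    using sorted_list_of_set_nonempty[of "insert a B"] assms(1) aB by simp
  obtain b bs where bs: "sorted_list_of_set B = b # bs"
    using assms(1,2) by (cases "sorted_list_of_set B") auto
  show ?thesis by (simp add: yblock_def s bs)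
qed

lemma tmul_sum_right: "tmul U (sum G A) = (\<Sum>a\<in>A. tmul U (G a))"
  using linear_pmD(4)[OF linear_tmul2[of U]] by simp

lemma dv_sum: "dv C z (sum G A) = (\<Sum>a\<in>A. dv C z (G a))"
  using linear_pmD(4)[OF linear_dv[of C z]] by simp

lemma dv_tprod:
  "distinct L \<Longrightarrow> dv C z (tprod (map (\<lambda>X. iota (h X)) L))
     = (\<Sum>X\<in>set L. tprod (map (\<lambda>X'. iota (if X' = X then mop C z (h X) else h X')) L))"
proof (induct L)
  case Nil
  then show ?case by (simp add: dv_tone)
next
  case (Cons X0 L)
  have X0: "X0 \<notin> set L" "distinct L" using Cons.prems by auto
  have e1: "map (\<lambda>X'. iota (if X' = X0 then mop C z (h X0) else h X')) L = map (\<lambda>X. iota (h X)) L"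
    using X0(1) by (intro map_cong) auto
  have e2: "(\<Sum>X\<in>set L. tprod (map (\<lambda>X'. iota (if X' = X then mop C z (h X) else h X')) (X0 # L)))
      = tmul (iota (h X0)) (\<Sum>X\<in>set L. tprod (map (\<lambda>X'. iota (if X' = X then mop C z (h X) else h X')) L))"
  proof -
    have "(\<Sum>X\<in>set L. tprod (map (\<lambda>X'. iota (if X' = X then mop C z (h X) else h X')) (X0 # L)))
       = (\<Sum>X\<in>set L. tmul (iota (h X0)) (tprod (map (\<lambda>X'. iota (if X' = X then mop C z (h X) else h X')) L)))"
      by (intro sum.cong refl) (use X0(1) in auto)
    also have "\<dots> = tmul (iota (h X0)) (\<Sum>X\<in>set L. tprod (map (\<lambda>X'. iota (if X' = X then mop C z (h X) else h X')) L))"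
      by (rule tmul_sum_right[symmetric])
    finally show ?thesis .
  qed
  have t0: "tprod (map (\<lambda>X'. iota (if X' = X0 then mop C z (h X0) else h X')) (X0 # L))
     = tmul (iota (mop C z (h X0))) (tprod (map (\<lambda>X. iota (h X)) L))"
    by (simp only: list.map tprod_Cons if_True simp_thms(6) e1)
  have "dv C z (tprod (map (\<lambda>X. iota (h X)) (X0 # L)))
     = tmul (iota (mop C z (h X0))) (tprod (map (\<lambda>X. iota (h X)) L)) + tmul (iota (h X0)) (dv C z (tprod (map (\<lambda>X. iota (h X)) L)))"
    by (simp add: dv_tmul dv_iota)
  also have "\<dots> = tprod (map (\<lambda>X'. iota (if X' = X0 then mop C z (h X0) else h X')) (X0 # L))
     + (\<Sum>X\<in>set L. tprod (map (\<lambda>X'. iota (if X' = X then mop C z (h X) else h X')) (X0 # L)))"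
    unfolding e2 Cons.hyps[OF X0(2)] t0 ..
  also have "\<dots> = (\<Sum>X\<in>set (X0 # L). tprod (map (\<lambda>X'. iota (if X' = X then mop C z (h X) else h X')) (X0 # L)))"
    by (simp only: list.set(2) sum.insert[OF finite_set X0(1)])
  finally show ?case .
qed

lemma YP1:
  assumes "partition_on (A::nat set) Q" "finite A" "\<forall>x\<in>A. a < x"
  shows "ypart C y (insert {a} Q) = tmul (iota (y a)) (ypart C y Q)"
  by (simp add: ypart_def SL1[OF assms] yblock_single)

lemma YP2:
  assumes "partition_on (A::nat set) Q" "finite A" "\<forall>x\<in>A. a < x"
  shows "dv C (y a) (ypart C y Q) = (\<Sum>B\<in>Q. ypart C y (insert (insert a B) (Q - {B})))"
proof -
  define L where "L = sorted_key_list_of_set Max Q"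
  have inj1: "inj_on Max Q" by (rule part_inj_Max[OF assms(1,2)])
  have finQ: "finite Q" by (rule finite_elements[OF assms(2,1)])
  have L: "set L = Q" "length L = card Q" using skl_props[OF inj1 finQ] by (auto simp: L_def)
  have dL: "distinct L" using L by (simp add: card_distinct)
  have "dv C (y a) (ypart C y Q) = dv C (y a) (tprod (map (\<lambda>X. iota (yblock C y X)) L))"
    by (simp add: ypart_def L_def)
  also have "\<dots> = (\<Sum>X\<in>Q. tprod (map (\<lambda>X'. iota (if X' = X then mop C (y a) (yblock C y X) else yblock C y X')) L))"
    by (simp add: dv_tprod[OF dL] L(1))
  also have "\<dots> = (\<Sum>B\<in>Q. ypart C y (insert (insert a B) (Q - {B})))"
  proof (rule sum.cong[OF refl])
    fix B assume B: "B \<in> Q"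
    note bf = block_facts[OF assms B]
    have yi: "yblock C y (insert a B) = mop C (y a) (yblock C y B)" by (rule yblock_insert[OF bf(1,2,3)])
    show "tprod (map (\<lambda>X'. iota (if X' = B then mop C (y a) (yblock C y B) else yblock C y X')) L)
        = ypart C y (insert (insert a B) (Q - {B}))"
      unfolding ypart_def SL2[OF assms B] L_def[symmetric]
      apply (simp add: comp_def if_distrib)
      apply (subst yi)
      apply (rule refl)
      done
  qed
  finally show ?thesis .
qed

lemma L_main: "Lmap C (tprod (map (\<lambda>i. iota (y i)) [a..<b])) = (\<Sum>P\<in>{P. partition_on {a..<b} P}. ypart C y P)"
proof (induct "b - a" arbitrary: a)
  case 0
  then have e: "[a..<b] = []" "{a..<b} = {}" by auto
  have s: "sorted_key_list_of_set Max ({} :: nat set set) = []"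
    by (subst skl_unique) auto
  show ?case by (simp add: e partition_on_empty ypart_def s tone_word L_word)
next
  case (Suc n)
  then have ab: "a < b" "n = b - Suc a" by auto
  have e: "[a..<b] = a # [Suc a..<b]" "{a..<b} = insert a {Suc a..<b}" using ab(1)
    by (auto simp: upt_conv_Cons)
  define A where "A = {Suc a..<b}"
  have A: "finite A" "\<forall>x\<in>A. a < x" "a \<notin> A" by (auto simp: A_def)
  have IH: "Lmap C (tprod (map (\<lambda>i. iota (y i)) [Suc a..<b])) = (\<Sum>Q\<in>{Q. partition_on A Q}. ypart C y Q)"
    using Suc.hyps(1)[OF ab(2)] by (simp add: A_def)
  have "Lmap C (tprod (map (\<lambda>i. iota (y i)) [a..<b]))
     = (\<Sum>Q\<in>{Q. partition_on A Q}. tmul (iota (y a)) (ypart C y Q) + dv C (y a) (ypart C y Q))"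
    by (simp add: e(1) L_tmul_iota IH tmul_lin2 linear_pmD[OF linear_dv] sum.distrib)
  also have "\<dots> = (\<Sum>Q\<in>{Q. partition_on A Q}. ypart C y (insert {a} Q) + (\<Sum>B\<in>Q. ypart C y (insert (insert a B) (Q - {B}))))"
    by (intro sum.cong refl) (use A in \<open>simp add: YP1 YP2\<close>)
  also have "\<dots> = (\<Sum>P\<in>{P. partition_on (insert a A) P}. ypart C y P)"
    by (rule parts_split[symmetric]) (use A in auto)
  finally show ?case by (simp add: e(2) A_def)
qed

theorem proposition2p19:
  fixes C :: "'b \<Rightarrow> 'b \<Rightarrow> ('b \<Rightarrow>\<^sub>0 'k::field_char_0)"
    and n :: nat
    and y :: "nat \<Rightarrow> ('b \<Rightarrow>\<^sub>0 'k)"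
  shows "inv (Kmap C) (tprod (map (\<lambda>i. iota (y i)) [1..<Suc n]))
           = (\<Sum>P \<in> {P. partition_on {1..n} P}. ypart C y P)"
  using L_main[of C y 1 "Suc n"] by (simp add: inv_Kmap atLeastLessThanSuc_atLeastAtMost)

end
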